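(* In the setting of the context, assume $a_\sigma:=e_\sigma^\ast e_\sigma\in K$ for all $\sigma\in G$ and let $\mathcal N$ be the (assumed nonempty) set of unital hermitian cones on $(K,\ast)$ containing all $a_\sigma$, $\sigma\in G$. For $N\in\mathcal N$ and $\sigma\in G$ put $N_\sigma=\{(n/a_\sigma)^{\sigma^{-1}}:n\in N\}=\{k\in K: a_\sigma k^\sigma\in N\}$. Then $N_\sigma\in\mathcal N$ and $(N_\tau)_\sigma=N_{\tau\sigma}$ for all $\sigma,\tau\in G$; thus this defines an action of $G$ on $\mathcal N$.
   Context: Let $K/F$ be a finite Galois extension of fields of characteristic $0$ with Galois group $G$; write $k^\sigma$ for the image of $k$ under $\sigma$. Let $\Phi$ be a normalized $2$-cocycle $G\times G\to K\setminus\{0\}$ and $D=(K/F,\Phi)$ the crossed product: right $K$-vector space with basis $(e_\sigma)_{\sigma\in G}$, $e_{\mathrm{id}}=1$, multiplication $(\sum e_\sigma c_\sigma)(\sum e_\tau d_\tau)=\sum e_{\sigma\tau}\Phi(\sigma,\tau)c_\sigma^\tau d_\tau$ (so $ke_\sigma=e_\sigma k^\sigma$). Assume $D$ is a division algebra and $\ast$ is an involution on $D$ with $K^\ast\subseteq K$. A unital hermitian cone on a ring $R$ with involution $\ast$ is a subset $M\subseteq\{r:r^\ast=r\}$ with $1\in M$, $M+M\subseteq M$, $aMa^\ast\subseteq M$ for all $a\in R$, and $M\cap-M=\{0\}$. *)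

theory Defs
  imports Main
begin

text \<open>Group elements are field automorphisms of the type 'k (the field K).
  We write k^sigma as sigma k.  The crossed-product rule k e_sigma = e_sigma k^sigma
  forces the right-action convention k^(sigma tau) = (k^sigma)^tau, i.e. the abstract
  product sigma tau corresponds to the function composition tau o sigma.\<close>

definition field_aut :: "('k::field \<Rightarrow> 'k) \<Rightarrow> bool" where
  "field_aut s \<longleftrightarrow> bij s \<and> (\<forall>x y. s (x + y) = s x + s y) \<and> (\<forall>x y. s (x * y) = s x * s y)"

text \<open>Elements of the crossed product D = (K/F, Phi): coefficient functions G -> K
  (c_sigma = x sigma), vanishing outside G.\<close>

definition cp_carrier :: "('k \<Rightarrow> 'k) set \<Rightarrow> (('k \<Rightarrow> 'k) \<Rightarrow> 'k::field) set" where
  "cp_carrier G = {x. \<forall>s. s \<notin> G \<longrightarrow> x s = 0}"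

definition cp_add :: "(('k \<Rightarrow> 'k) \<Rightarrow> 'k::field) \<Rightarrow> (('k \<Rightarrow> 'k) \<Rightarrow> 'k) \<Rightarrow> (('k \<Rightarrow> 'k) \<Rightarrow> 'k)" where
  "cp_add x y = (\<lambda>r. x r + y r)"

definition cp_zero :: "('k \<Rightarrow> 'k) \<Rightarrow> 'k::field" where
  "cp_zero = (\<lambda>r. 0)"

text \<open>(sum e_s c_s)(sum e_t d_t) = sum e_(s t) Phi(s,t) c_s^t d_t, with s t = t o s.\<close>
definition cp_mult :: "('k \<Rightarrow> 'k) set \<Rightarrow> (('k \<Rightarrow> 'k) \<Rightarrow> ('k \<Rightarrow> 'k) \<Rightarrow> 'k::field)
    \<Rightarrow> (('k \<Rightarrow> 'k) \<Rightarrow> 'k) \<Rightarrow> (('k \<Rightarrow> 'k) \<Rightarrow> 'k) \<Rightarrow> (('k \<Rightarrow> 'k) \<Rightarrow> 'k)" where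
  "cp_mult G Phi x y = (\<lambda>r. \<Sum>s\<in>G. \<Sum>t\<in>G. if t \<circ> s = r then Phi s t * t (x s) * y t else 0)"

definition cp_e :: "('k \<Rightarrow> 'k) \<Rightarrow> (('k \<Rightarrow> 'k) \<Rightarrow> 'k::field)" where
  "cp_e s = (\<lambda>r. if r = s then 1 else 0)"

definition cp_emb :: "'k \<Rightarrow> (('k \<Rightarrow> 'k) \<Rightarrow> 'k::field)" where
  "cp_emb k = (\<lambda>r. if r = id then k else 0)"

definition cp_one :: "('k \<Rightarrow> 'k) \<Rightarrow> 'k::field" where
  "cp_one = cp_emb 1"

text \<open>Restriction of the involution to K (meaningful when K^* \<subseteq> K).\<close>
definition kstar :: "((('k \<Rightarrow> 'k) \<Rightarrow> 'k) \<Rightarrow> (('k \<Rightarrow> 'k) \<Rightarrow> 'k)) \<Rightarrow> 'k \<Rightarrow> 'k::field" where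
  "kstar star k = (THE k'. star (cp_emb k) = cp_emb k')"

definition cp_a :: "('k \<Rightarrow> 'k) set \<Rightarrow> (('k \<Rightarrow> 'k) \<Rightarrow> ('k \<Rightarrow> 'k) \<Rightarrow> 'k::field)
    \<Rightarrow> ((('k \<Rightarrow> 'k) \<Rightarrow> 'k) \<Rightarrow> (('k \<Rightarrow> 'k) \<Rightarrow> 'k)) \<Rightarrow> ('k \<Rightarrow> 'k) \<Rightarrow> 'k" where
  "cp_a G Phi star s = (THE k. cp_mult G Phi (star (cp_e s)) (cp_e s) = cp_emb k)"

definition unital_herm_cone :: "('a::ring_1 \<Rightarrow> 'a) \<Rightarrow> 'a set \<Rightarrow> bool" where
  "unital_herm_cone invl M \<longleftrightarrow>
     M \<subseteq> {r. invl r = r} \<and> 1 \<in> M \<and> (\<forall>x\<in>M. \<forall>y\<in>M. x + y \<in> M) \<and>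
     (\<forall>a. \<forall>m\<in>M. a * m * invl a \<in> M) \<and> M \<inter> uminus ` M = {0}"

definition cone_shift :: "(('k::field \<Rightarrow> 'k) \<Rightarrow> 'k) \<Rightarrow> 'k set \<Rightarrow> ('k \<Rightarrow> 'k) \<Rightarrow> 'k set" where
  "cone_shift a N s = {k. a s * s k \<in> N}"

end

theory Submission imports Defs begin

definition mono :: "('k \<Rightarrow> 'k) \<Rightarrow> 'k \<Rightarrow> (('k \<Rightarrow> 'k) \<Rightarrow> 'k::field)" where
  "mono u c = (\<lambda>r. if r = u then c else 0)"

lemma aut_basic:
  assumes "field_aut s"
  shows "s 0 = 0" "s (x+y) = s x + s y" "s (x*y) = s x * s y" "s (inv s y) = y"
    "inv s (s x) = x" "inj s" "s \<circ> inv s = id" "inv s \<circ> s = id" "bij s"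
proof -
  have b: "bij s" and ad: "\<And>x y. s (x+y) = s x + s y" and mu: "\<And>x y. s (x*y) = s x * s y"
    using assms unfolding field_aut_def by auto
  show "bij s" by fact
  show "s (x+y) = s x + s y" "s (x*y) = s x * s y" using ad mu by auto
  have "s 0 + s 0 = s 0 + 0" using ad[of 0 0] by simp
  then show "s 0 = 0" by (rule add_left_imp_eq)
  show "s (inv s y) = y" using b by (simp add: bij_is_surj surj_f_inv_f)
  show "inv s (s x) = x" using b by (simp add: bij_is_inj)
  show "inj s" using b by (simp add: bij_is_inj)
  show "s \<circ> inv s = id" using b bij_is_surj surj_iff by blast
  show "inv s \<circ> s = id" using b bij_is_inj inj_iff by blast
qed

lemma aut_one: assumes "field_aut s" shows "s 1 = 1"
proof -
  have "s 1 * s (inv s 1) = s (1 * inv s 1)" using aut_basic(3)[OF assms] by metis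
  then show ?thesis using aut_basic(4)[OF assms] by simp
qed

lemma aut_zero_iff: assumes "field_aut s" shows "(s x = 0) = (x = 0)"
  using aut_basic[OF assms] by (metis)

lemma mult_mono_right:
  assumes "w \<in> G" "finite G"
  shows "cp_mult G Phi x (mono w d) r = (\<Sum>p\<in>G. if w \<circ> p = r then Phi p w * w (x p) * d else 0)"
  unfolding cp_mult_def
proof (rule sum.cong[OF refl])
  fix p assume "p \<in> G"
  have "(\<lambda>t. if t \<circ> p = r then Phi p t * t (x p) * mono w d t else 0)
      = (\<lambda>t. if t = w then (if w \<circ> p = r then Phi p w * w (x p) * d else 0) else 0)"
    by (auto simp: mono_def)
  note eq = this
  show "(\<Sum>t\<in>G. if t \<circ> p = r then Phi p t * t (x p) * mono w d t else 0) =
         (if w \<circ> p = r then Phi p w * w (x p) * d else 0)"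
    unfolding eq using assms by (simp add: sum.delta)
qed

lemma mono_mult:
  assumes "u \<in> G" "w \<in> G" "w 0 = 0" "finite G"
  shows "cp_mult G Phi (mono u c) (mono w d) = mono (w \<circ> u) (Phi u w * w c * d)"
proof
  fix r
  have "(\<lambda>p. if w \<circ> p = r then Phi p w * w (mono u c p) * d else 0)
     = (\<lambda>p. if p = u then (if w \<circ> u = r then Phi u w * w c * d else 0) else 0)"
    using assms by (auto simp: mono_def)
  note eq = this
  show "cp_mult G Phi (mono u c) (mono w d) r = mono (w \<circ> u) (Phi u w * w c * d) r"
    unfolding mult_mono_right[OF assms(2) assms(4)] eq using assms by (simp add: sum.delta mono_def)
qed

lemma mult_mono_at:
  assumes "w \<in> G" "p0 \<in> G" "inj w" "finite G"
  shows "cp_mult G Phi x (mono w d) (w \<circ> p0) = Phi p0 w * w (x p0) * d"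
proof -
  have "\<And>p. (w \<circ> p = w \<circ> p0) = (p = p0)"
    using assms(3) by (metis fun.inj_map_strong inj_eq)
  then have "(\<lambda>p. if w \<circ> p = w \<circ> p0 then Phi p w * w (x p) * d else 0)
     = (\<lambda>p. if p = p0 then Phi p0 w * w (x p0) * d else 0)" by auto
  note eq = this
  show ?thesis unfolding mult_mono_right[OF assms(1) assms(4)] eq using assms by (simp add: sum.delta)
qed

theorem lemma4p1:
  fixes G :: "('k::field_char_0 \<Rightarrow> 'k) set"
    and Phi :: "('k \<Rightarrow> 'k) \<Rightarrow> ('k \<Rightarrow> 'k) \<Rightarrow> 'k"
    and star :: "(('k \<Rightarrow> 'k) \<Rightarrow> 'k) \<Rightarrow> (('k \<Rightarrow> 'k) \<Rightarrow> 'k)"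
  assumes G_fin: "finite G"
    and G_aut: "\<forall>s\<in>G. field_aut s"
    and G_id: "id \<in> G"
    and G_comp: "\<forall>s\<in>G. \<forall>t\<in>G. s \<circ> t \<in> G"
    and G_inv: "\<forall>s\<in>G. inv s \<in> G"
    and Phi_nz: "\<forall>s\<in>G. \<forall>t\<in>G. Phi s t \<noteq> 0"
    and Phi_norm: "\<forall>s\<in>G. Phi id s = 1 \<and> Phi s id = 1"
    and Phi_cocycle: "\<forall>s\<in>G. \<forall>t\<in>G. \<forall>r\<in>G.
        Phi (t \<circ> s) r * r (Phi s t) = Phi s (r \<circ> t) * Phi t r"
    and D_division: "\<forall>x\<in>cp_carrier G. x \<noteq> cp_zero \<longrightarrow>
        (\<exists>y\<in>cp_carrier G. cp_mult G Phi x y = cp_one \<and> cp_mult G Phi y x = cp_one)"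
    and star_closed: "\<forall>x\<in>cp_carrier G. star x \<in> cp_carrier G"
    and star_add: "\<forall>x\<in>cp_carrier G. \<forall>y\<in>cp_carrier G. star (cp_add x y) = cp_add (star x) (star y)"
    and star_mult: "\<forall>x\<in>cp_carrier G. \<forall>y\<in>cp_carrier G.
        star (cp_mult G Phi x y) = cp_mult G Phi (star y) (star x)"
    and star_invol: "\<forall>x\<in>cp_carrier G. star (star x) = x"
    and star_K: "\<forall>k. \<exists>k'. star (cp_emb k) = cp_emb k'"
    and a_in_K: "\<forall>s\<in>G. \<exists>k. cp_mult G Phi (star (cp_e s)) (cp_e s) = cp_emb k"
    and NN_ne: "{N. unital_herm_cone (kstar star) N \<and> (\<forall>s\<in>G. cp_a G Phi star s \<in> N)} \<noteq> {}"
  shows "\<forall>N\<in>{N. unital_herm_cone (kstar star) N \<and> (\<forall>s\<in>G. cp_a G Phi star s \<in> N)}.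
           \<forall>s\<in>G.
             cone_shift (cp_a G Phi star) N s = {(inv s) (n / cp_a G Phi star s) | n. n \<in> N} \<and>
             cone_shift (cp_a G Phi star) N s \<in>
               {N. unital_herm_cone (kstar star) N \<and> (\<forall>s\<in>G. cp_a G Phi star s \<in> N)} \<and>
             (\<forall>t\<in>G. cone_shift (cp_a G Phi star) (cone_shift (cp_a G Phi star) N t) s
                      = cone_shift (cp_a G Phi star) N (t \<circ> s))"
proof -
  define ks where "ks = kstar star"
  define A where "A = cp_a G Phi star"
  have aut: "\<And>s. s\<in>G \<Longrightarrow> field_aut s" using G_aut by auto
  have emb_mono: "\<And>k. cp_emb k = mono id k" by (simp add: cp_emb_def mono_def fun_eq_iff)
  have e_mono: "\<And>s. cp_e s = mono s 1" by (simp add: cp_e_def mono_def fun_eq_iff)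
  have mono_carr: "\<And>u c. u \<in> G \<Longrightarrow> mono u c \<in> cp_carrier G" by (auto simp: cp_carrier_def mono_def)
  have mono_eq: "\<And>u c d. (mono u c = mono u d) = (c = d)" by (auto simp: mono_def fun_eq_iff dest: fun_cong)
  have mono_at: "\<And>u c. mono u c u = c" by (simp add: mono_def)
  have MM: "\<And>u w c d. u\<in>G \<Longrightarrow> w\<in>G \<Longrightarrow> cp_mult G Phi (mono u c) (mono w d) = mono (w\<circ>u) (Phi u w * w c * d)"
    using mono_mult aut aut_basic(1) G_fin by metis
  have Pid: "\<And>s. s \<in> G \<Longrightarrow> Phi id s = 1" "\<And>s. s \<in> G \<Longrightarrow> Phi s id = 1" using Phi_norm by auto
  have invG: "\<And>s. s \<in> G \<Longrightarrow> inv s \<in> G" using G_inv by auto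
  have compG: "\<And>s t. s \<in> G \<Longrightarrow> t \<in> G \<Longrightarrow> s \<circ> t \<in> G" using G_comp by auto
  have rinv: "\<And>s. s \<in> G \<Longrightarrow> s \<circ> inv s = id" using aut aut_basic(7) by blast
  have linv: "\<And>s. s \<in> G \<Longrightarrow> inv s \<circ> s = id" using aut aut_basic(8) by blast
  have ks_emb: "\<And>k. star (mono id k) = mono id (ks k)"
  proof -
    fix k obtain k' where k': "star (cp_emb k) = cp_emb k'" using star_K by blast
    then show "star (mono id k) = mono id (ks k)"
      unfolding ks_def kstar_def emb_mono by (simp add: mono_eq)
  qed
  have ks_mult: "\<And>a b. ks (a*b) = ks a * ks b"
  proof -
    fix a b :: 'k
    have "mono id (a*b) = cp_mult G Phi (mono id a) (mono id b)" using MM[OF G_id G_id] Pid G_id by simp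
    then have "star (mono id (a*b)) = cp_mult G Phi (star (mono id b)) (star (mono id a))"
      using star_mult mono_carr G_id by simp
    then have "mono id (ks (a*b)) = mono id (ks b * ks a)" using MM[OF G_id G_id] Pid G_id ks_emb by simp
    then show "ks (a*b) = ks a * ks b" by (simp add: mono_eq mult.commute)
  qed
  have ks_add: "\<And>a b. ks (a+b) = ks a + ks b"
  proof -
    fix a b :: 'k
    have "mono id (a+b) = cp_add (mono id a) (mono id b)" by (auto simp: cp_add_def mono_def fun_eq_iff)
    then have "star (mono id (a+b)) = cp_add (star (mono id a)) (star (mono id b))"
      using star_add mono_carr G_id by simp
    then have "mono id (ks (a+b)) = mono id (ks a + ks b)" using ks_emb
      by (auto simp: cp_add_def mono_def fun_eq_iff)
    then show "ks (a+b) = ks a + ks b" by (simp add: mono_eq)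
  qed
  have ks_inv: "\<And>k. ks (ks k) = k"
  proof -
    fix k
    have "star (star (mono id k)) = mono id k" using star_invol mono_carr G_id by simp
    then show "ks (ks k) = k" using ks_emb by (simp add: mono_eq)
  qed
  have ks0: "ks 0 = 0"
  proof -
    have "ks 0 + ks 0 = ks 0 + 0" using ks_add[of 0 0] by simp
    then show ?thesis by (rule add_left_imp_eq)
  qed
  have ks1: "ks 1 = 1"
  proof -
    have "ks 1 * ks 1 = ks 1 * 1" using ks_mult[of 1 1] by simp
    moreover have "ks 1 \<noteq> 0" using ks_inv[of 1] ks0 by force
    ultimately show ?thesis by simp
  qed
  have star0: "star cp_zero = cp_zero"
  proof -
    have z: "cp_zero \<in> cp_carrier G" by (simp add: cp_carrier_def cp_zero_def)
    have "cp_add cp_zero cp_zero = (cp_zero :: ('k \<Rightarrow> 'k) \<Rightarrow> 'k)" by (simp add: cp_add_def cp_zero_def)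
    then have "star cp_zero = cp_add (star cp_zero) (star cp_zero)" using star_add z by metis
    then have "\<And>r. star cp_zero r + star cp_zero r = star cp_zero r + 0" by (metis add.right_neutral cp_add_def)
    then show ?thesis by (simp add: fun_eq_iff cp_zero_def)
  qed
  define v where "v s = star (mono s 1) (inv s)" for s
  have xs: "\<And>s. s \<in> G \<Longrightarrow> star (mono s 1) = mono (inv s) (v s)"
  proof -
    fix s assume sG: "s \<in> G"
    define x where "x = star (mono s 1)"
    have xc: "x \<in> cp_carrier G" using star_closed mono_carr sG x_def by simp
    obtain k where k: "cp_mult G Phi x (mono s 1) = mono id k"
      using a_in_K sG unfolding x_def e_mono emb_mono by blast
    show "star (mono s 1) = mono (inv s) (v s)"
    proof
      fix r
      show "star (mono s 1) r = mono (inv s) (v s) r"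
      proof (cases "r \<in> G")
        case False
        then show ?thesis using xc invG[OF sG] unfolding x_def cp_carrier_def mono_def by auto
      next
        case True
        show ?thesis
        proof (cases "r = inv s")
          case True then show ?thesis by (simp add: v_def mono_def)
        next
          case False
          have "s \<circ> r \<noteq> id"
          proof
            assume "s \<circ> r = id"
            then have "inv s \<circ> (s \<circ> r) = inv s" by simp
            then have "r = inv s" using linv[OF sG] by (simp add: comp_assoc[symmetric])
            then show False using False by simp
          qed
          then have "cp_mult G Phi x (mono s 1) (s \<circ> r) = 0" using k by (simp add: mono_def)
          moreover have "cp_mult G Phi x (mono s 1) (s \<circ> r) = Phi r s * s (x r) * 1"
            using mult_mono_at[OF sG True aut_basic(6)[OF aut[OF sG]] G_fin] .
          ultimately have "s (x r) = 0" using Phi_nz True sG by auto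
          then have "x r = 0" using aut_zero_iff[OF aut[OF sG]] by simp
          then show ?thesis using False x_def by (simp add: mono_def)
        qed
      qed
    qed
  qed
  have v_nz: "\<And>s. s \<in> G \<Longrightarrow> v s \<noteq> 0"
  proof
    fix s assume sG: "s \<in> G" and "v s = 0"
    then have "star (mono s 1) = cp_zero" using xs by (simp add: mono_def cp_zero_def fun_eq_iff)
    then have "star (star (mono s 1)) = cp_zero" using star0 by simp
    then have "mono s 1 = (cp_zero :: ('k \<Rightarrow> 'k) \<Rightarrow> 'k)" using star_invol mono_carr sG by simp
    then show False using mono_at[of s "1::'k"] by (simp add: cp_zero_def)
  qed
  have A_val: "\<And>s. s \<in> G \<Longrightarrow> A s = Phi (inv s) s * s (v s)"
  proof -
    fix s assume sG: "s \<in> G"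
    have "cp_mult G Phi (star (cp_e s)) (cp_e s) = cp_emb (Phi (inv s) s * s (v s))"
      unfolding e_mono emb_mono xs[OF sG] MM[OF invG[OF sG] sG] rinv[OF sG] by simp
    then show "A s = Phi (inv s) s * s (v s)" unfolding A_def cp_a_def emb_mono by (simp add: mono_eq)
  qed
  have A_nz: "\<And>s. s \<in> G \<Longrightarrow> A s \<noteq> 0"
    using A_val v_nz Phi_nz invG aut aut_zero_iff by (metis mult_eq_0_iff)
  have comm: "\<And>s k. s \<in> G \<Longrightarrow> ks (s k) = s (ks k)"
  proof -
    fix s k assume sG: "s \<in> G"
    have "cp_mult G Phi (mono id k) (mono s 1) = cp_mult G Phi (mono s 1) (mono id (s k))"
      unfolding MM[OF G_id sG] MM[OF sG G_id] using Pid sG G_id by simp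
    then have "star (cp_mult G Phi (mono id k) (mono s 1)) = star (cp_mult G Phi (mono s 1) (mono id (s k)))" by simp
    then have "cp_mult G Phi (star (mono s 1)) (star (mono id k)) = cp_mult G Phi (star (mono id (s k))) (star (mono s 1))"
      using star_mult mono_carr sG G_id by simp
    then have "mono (inv s) (v s * ks k) = mono (inv s) (inv s (ks (s k)) * v s)"
      unfolding xs[OF sG] ks_emb MM[OF invG[OF sG] G_id] MM[OF G_id invG[OF sG]]
      using Pid invG[OF sG] by simp
    then have "v s * ks k = inv s (ks (s k)) * v s" by (simp add: mono_eq)
    then have "ks k = inv s (ks (s k))" using v_nz[OF sG] by (simp add: mult.commute)
    then show "ks (s k) = s (ks k)" using aut_basic(4)[OF aut[OF sG]] by simp
  qed
  have keyI: "\<And>s t. s \<in> G \<Longrightarrow> t \<in> G \<Longrightarrow> A t * t (A s) = Phi s t * ks (Phi s t) * A (t \<circ> s)"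
  proof -
    fix s t assume sG: "s \<in> G" and tG: "t \<in> G"
    define u where "u = t \<circ> s"
    have uG: "u \<in> G" using compG sG tG u_def by simp
    have au: "field_aut u" using aut uG by simp
    have at: "field_aut t" and as: "field_aut s" using aut sG tG by auto
    have invu: "inv u = inv s \<circ> inv t" unfolding u_def
      using o_inv_distrib aut_basic(9) at as by blast
    have "cp_mult G Phi (mono s 1) (mono t 1) = cp_mult G Phi (mono u 1) (mono id (Phi s t))"
      unfolding MM[OF sG tG] MM[OF uG G_id] using Pid uG aut_one[OF at] u_def by simp
    then have "star (cp_mult G Phi (mono s 1) (mono t 1)) = star (cp_mult G Phi (mono u 1) (mono id (Phi s t)))" by simp
    then have "cp_mult G Phi (star (mono t 1)) (star (mono s 1)) = cp_mult G Phi (star (mono id (Phi s t))) (star (mono u 1))"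
      using star_mult mono_carr sG tG uG G_id by simp
    then have "mono (inv s \<circ> inv t) (Phi (inv t) (inv s) * inv s (v t) * v s)
        = mono (inv u) (Phi id (inv u) * inv u (ks (Phi s t)) * v u)"
      unfolding xs[OF sG] xs[OF tG] xs[OF uG] ks_emb MM[OF invG[OF tG] invG[OF sG]] MM[OF G_id invG[OF uG]]
      by simp
    then have E1: "Phi (inv t) (inv s) * inv s (v t) * v s = inv u (ks (Phi s t)) * v u"
      using Pid(1)[OF invG[OF uG]] unfolding invu[symmetric] by (simp add: mono_eq)
    have "u (Phi (inv t) (inv s) * inv s (v t) * v s) = u (inv u (ks (Phi s t)) * v u)"
      using E1 by simp
    moreover have "u (inv s (v t)) = t (v t)" unfolding u_def using aut_basic(4)[OF as] by simp
    ultimately have E2: "u (Phi (inv t) (inv s)) * t (v t) * t (s (v s)) = ks (Phi s t) * u (v u)"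
      using aut_basic(3,4)[OF au] unfolding u_def by simp
    have C1: "Phi (inv s \<circ> inv t) u * u (Phi (inv t) (inv s)) = Phi (inv t) t * Phi (inv s) u"
    proof -
      have "Phi (inv s \<circ> inv t) u * u (Phi (inv t) (inv s)) = Phi (inv t) (u \<circ> inv s) * Phi (inv s) u"
        using Phi_cocycle invG sG tG uG by blast
      moreover have "u \<circ> inv s = t" unfolding u_def using rinv[OF sG] by (simp add: comp_assoc)
      ultimately show ?thesis by simp
    qed
    have C2: "t (Phi (inv s) s) = Phi (inv s) u * Phi s t"
    proof -
      have "Phi (s \<circ> inv s) t * t (Phi (inv s) s) = Phi (inv s) (t \<circ> s) * Phi s t"
        using Phi_cocycle invG sG tG by blast
      then show ?thesis using rinv[OF sG] Pid tG u_def by simp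
    qed
    have "Phi s t * ks (Phi s t) * A u = Phi s t * Phi (inv u) u * (ks (Phi s t) * u (v u))"
      using A_val[OF uG] by (simp add: ac_simps)
    also have "\<dots> = Phi s t * (Phi (inv u) u * u (Phi (inv t) (inv s))) * t (v t) * t (s (v s))"
      using E2[symmetric] by (simp add: ac_simps)
    also have "\<dots> = Phi s t * (Phi (inv t) t * Phi (inv s) u) * t (v t) * t (s (v s))"
      using C1 invu by simp
    also have "\<dots> = (Phi (inv t) t * t (v t)) * (t (Phi (inv s) s) * t (s (v s)))"
      using C2 by (simp add: ac_simps)
    also have "\<dots> = A t * t (A s)"
      using A_val sG tG aut_basic(3)[OF at] by simp
    finally show "A t * t (A s) = Phi s t * ks (Phi s t) * A (t \<circ> s)" unfolding u_def by simp
  qed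
  have main: "\<forall>N\<in>{N. unital_herm_cone ks N \<and> (\<forall>s\<in>G. A s \<in> N)}.
           \<forall>s\<in>G.
             cone_shift A N s = {(inv s) (n / A s) | n. n \<in> N} \<and>
             cone_shift A N s \<in> {N. unital_herm_cone ks N \<and> (\<forall>s\<in>G. A s \<in> N)} \<and>
             (\<forall>t\<in>G. cone_shift A (cone_shift A N t) s = cone_shift A N (t \<circ> s))"
  proof (intro ballI)
    fix N s assume NN: "N \<in> {N. unital_herm_cone ks N \<and> (\<forall>s\<in>G. A s \<in> N)}" and sG: "s \<in> G"
    have herm: "\<And>m. m \<in> N \<Longrightarrow> ks m = m" and one: "1 \<in> N"
      and addN: "\<And>x y. x \<in> N \<Longrightarrow> y \<in> N \<Longrightarrow> x + y \<in> N"
      and conj: "\<And>b m. m \<in> N \<Longrightarrow> b * m * ks b \<in> N"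
      and disj: "N \<inter> uminus ` N = {0}" and AN: "\<And>s. s \<in> G \<Longrightarrow> A s \<in> N"
      using NN unfolding unital_herm_cone_def by auto
    have zN: "0 \<in> N" using conj[OF one, of 0] by simp
    have scale: "\<And>c y. c \<noteq> 0 \<Longrightarrow> (c * ks c * y \<in> N) = (y \<in> N)"
    proof
      fix c y :: 'k assume c: "c \<noteq> 0"
      show "y \<in> N \<Longrightarrow> c * ks c * y \<in> N" using conj[of y c] by (simp add: ac_simps)
      assume "c * ks c * y \<in> N"
      then have "inverse c * (c * ks c * y) * ks (inverse c) \<in> N" by (rule conj)
      moreover have "ks c * ks (inverse c) = 1" using ks_mult[of c "inverse c"] c ks1 by simp
      ultimately show "y \<in> N" using c by (simp add: field_simps)
    qed
    have as: "field_aut s" using aut sG by simp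
    have As: "A s \<noteq> 0" using A_nz sG by simp
    define M where "M = cone_shift A N s"
    have Mdef: "\<And>k. (k \<in> M) = (A s * s k \<in> N)" unfolding M_def cone_shift_def by simp
    have p1: "cone_shift A N s = {(inv s) (n / A s) | n. n \<in> N}"
    proof (rule set_eqI, rule iffI)
      fix k assume "k \<in> cone_shift A N s"
      then have "A s * s k \<in> N" using Mdef M_def by simp
      moreover have "k = inv s ((A s * s k) / A s)" using As aut_basic(5)[OF as] by simp
      ultimately show "k \<in> {(inv s) (n / A s) | n. n \<in> N}" by blast
    next
      fix k assume "k \<in> {(inv s) (n / A s) | n. n \<in> N}"
      then obtain n where n: "n \<in> N" "k = inv s (n / A s)" by blast
      then have "A s * s k = n" using As aut_basic(4)[OF as] by simp
      then show "k \<in> cone_shift A N s" using n Mdef M_def by simp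
    qed
    have "unital_herm_cone ks M"
      unfolding unital_herm_cone_def
    proof (intro conjI subsetI ballI allI)
      fix k assume "k \<in> M"
      then have "A s * s k \<in> N" using Mdef by simp
      then have "ks (A s * s k) = A s * s k" by (rule herm)
      then have "A s * s (ks k) = A s * s k" using ks_mult comm[OF sG] herm[OF AN[OF sG]] by simp
      then have "s (ks k) = s k" using As by simp
      then have "ks k = k" using aut_basic(6)[OF as] by (simp add: inj_eq)
      then show "k \<in> {r. ks r = r}" by simp
    next
      show "1 \<in> M" using Mdef AN[OF sG] aut_one[OF as] by simp
    next
      fix x y assume "x \<in> M" "y \<in> M"
      then show "x + y \<in> M" using Mdef addN aut_basic(2)[OF as] by (simp add: distrib_left)
    next
      fix b m assume "m \<in> M"
      then have "s b * (A s * s m) * ks (s b) \<in> N" using Mdef conj by simp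
      then show "b * m * ks b \<in> M" using Mdef comm[OF sG] aut_basic(3)[OF as] by (simp add: ac_simps)
    next
      show "M \<inter> uminus ` M = {0}"
      proof (rule set_eqI, rule iffI)
        fix k assume "k \<in> M \<inter> uminus ` M"
        then have kM: "k \<in> M" and "k \<in> uminus ` M" by blast+
        then obtain m where mM: "m \<in> M" and km: "k = - m" by blast
        have k1: "A s * s k \<in> N" using kM Mdef by blast
        have m1: "A s * s m \<in> N" using mM Mdef by blast
        have "s k + s m = s (k + m)" using aut_basic(2)[OF as] by simp
        also have "k + m = 0" using km by simp
        finally have "s k + s m = 0" using aut_basic(1)[OF as] by simp
        then have "s k = - s m" by (simp add: eq_neg_iff_add_eq_0)
        then have "A s * s k = - (A s * s m)" by simp
        then have "A s * s k \<in> N \<inter> uminus ` N" using k1 m1 by blast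
        then have "A s * s k = 0" using disj by auto
        then have "k = 0" using As aut_zero_iff[OF as] by simp
        then show "k \<in> {0}" by simp
      next
        fix k :: 'k assume "k \<in> {0}"
        then have "k = 0" by simp
        moreover have "0 \<in> M" using Mdef zN aut_basic(1)[OF as] by simp
        ultimately show "k \<in> M \<inter> uminus ` M" using image_eqI[of "0::'k" uminus 0 M] by simp
      qed
    qed
    moreover have "\<forall>t\<in>G. A t \<in> M"
    proof
      fix t assume tG: "t \<in> G"
      have "A s * s (A t) = Phi t s * ks (Phi t s) * A (s \<circ> t)" using keyI[OF tG sG] .
      moreover have "A (s \<circ> t) \<in> N" using AN compG sG tG by simp
      ultimately show "A t \<in> M" using Mdef scale Phi_nz sG tG by simp
    qed
    ultimately have p2: "cone_shift A N s \<in> {N. unital_herm_cone ks N \<and> (\<forall>s\<in>G. A s \<in> N)}"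
      using M_def by simp
    have p3: "\<forall>t\<in>G. cone_shift A (cone_shift A N t) s = cone_shift A N (t \<circ> s)"
    proof
      fix t assume tG: "t \<in> G"
      have at: "field_aut t" using aut tG by simp
      show "cone_shift A (cone_shift A N t) s = cone_shift A N (t \<circ> s)"
      proof (rule set_eqI)
        fix k
        have "(k \<in> cone_shift A (cone_shift A N t) s) = (A t * t (A s * s k) \<in> N)"
          unfolding cone_shift_def by simp
        also have "\<dots> = (Phi s t * ks (Phi s t) * (A (t \<circ> s) * (t \<circ> s) k) \<in> N)"
        proof -
          have "A t * t (A s * s k) = (A t * t (A s)) * t (s k)" using aut_basic(3)[OF at] by (simp add: ac_simps)
          also have "\<dots> = Phi s t * ks (Phi s t) * (A (t \<circ> s) * (t \<circ> s) k)"
            unfolding keyI[OF sG tG] by (simp add: ac_simps)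
          finally show ?thesis by simp
        qed
        also have "\<dots> = (A (t \<circ> s) * (t \<circ> s) k \<in> N)" using scale Phi_nz sG tG by simp
        finally show "(k \<in> cone_shift A (cone_shift A N t) s) = (k \<in> cone_shift A N (t \<circ> s))"
          unfolding cone_shift_def by simp
      qed
    qed
    show "cone_shift A N s = {(inv s) (n / A s) | n. n \<in> N} \<and>
             cone_shift A N s \<in> {N. unital_herm_cone ks N \<and> (\<forall>s\<in>G. A s \<in> N)} \<and>
             (\<forall>t\<in>G. cone_shift A (cone_shift A N t) s = cone_shift A N (t \<circ> s))"
      using p1 p2 p3 by blast
  qed
  show ?thesis using main unfolding ks_def A_def .
qed

end
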